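(* Let $\gamma\in(0,1)$ and $c\ge 0$. Define the deterministic sequence $\bar v^0=0$ and, for $n\ge 1$, $$\hat v^n = c+\gamma \bar v^{n-1},\qquad \bar v^n=\Big(1-\tfrac1n\Big)\bar v^{n-1}+\tfrac1n \hat v^n .$$ Then for all $n=0,1,2,\dots$, $$\bar v^n \ \ge\ \frac{c}{1-\gamma}\Big(1-(n+1)^{-(1-\gamma)}\Big).$$
   Context: This is approximate value iteration for a single-state, single-action problem with deterministic one-period reward $c$, discount factor $\gamma$, initial approximation $0$, and stepsize $\alpha_{n-1}=1/n$. The true value is $c/(1-\gamma)$. *)

theory Defs
  imports Complex_Main
begin

primrec avi_vbar :: "real \<Rightarrow> real \<Rightarrow> nat \<Rightarrow> real" where
  "avi_vbar c \<gamma> 0 = 0"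
| "avi_vbar c \<gamma> (Suc m) =
     (let n = real (Suc m); vh = c + \<gamma> * avi_vbar c \<gamma> m
      in (1 - 1 / n) * avi_vbar c \<gamma> m + (1 / n) * vh)"

end

theory Submission
  imports Defs
begin

lemma key:
  fixes a :: real and m :: nat
  assumes "0 < a" "a < 1"
  shows "(1 - a / (real m + 1)) * (real m + 1) powr (-a) \<le> (real m + 2) powr (-a)"
proof -
  define t where "t = 1 / (real m + 1)"
  have t0: "0 \<le> t" by (simp add: t_def)
  have eq: "real m + 2 = (real m + 1) * (1 + t)" by (simp add: t_def field_simps)
  have "(real m + 2) powr (-a) = (real m + 1) powr (-a) * (1 + t) powr (-a)"
    by (simp add: eq powr_mult t0)
  moreover have "(1 + t) powr (-a) \<ge> 1 - a * t"
  proof -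
    have "(1 + t) powr (-a) = exp (-a * ln (1 + t))" using t0 by (simp add: powr_def)
    also have "\<dots> \<ge> 1 + (-a * ln (1 + t))" by (rule exp_ge_add_one_self)
    finally have h: "(1 + t) powr (-a) \<ge> 1 - a * ln (1 + t)" by simp
    have "ln (1 + t) \<le> t" using t0 by (simp add: ln_add_one_self_le_self)
    hence "a * ln (1 + t) \<le> a * t" using assms by (simp add: mult_left_mono)
    thus ?thesis using h by linarith
  qed
  moreover have "a / (real m + 1) = a * t" by (simp add: t_def)
  ultimately show ?thesis
    by (simp add: mult_left_mono mult.commute)
qed

theorem theorem1:
  fixes c \<gamma> :: real and n :: nat
  assumes "0 < \<gamma>" and "\<gamma> < 1" and "0 \<le> c"
  shows "avi_vbar c \<gamma> n \<ge> c / (1 - \<gamma>) * (1 - (real n + 1) powr (-(1 - \<gamma>)))"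
proof (induction n)
  case 0
  then show ?case by simp
next
  case (Suc m)
  define a where "a = 1 - \<gamma>"
  define V where "V = c / (1 - \<gamma>)"
  define p where "p = (real m + 1) powr (-a)"
  define v where "v = avi_vbar c \<gamma> m"
  have a0: "0 < a" "a < 1" using assms by (auto simp: a_def)
  have V0: "0 \<le> V" using assms by (simp add: V_def)
  have cV: "c = a * V" using assms by (simp add: V_def a_def)
  have IH: "v \<ge> V * (1 - p)" using Suc by (simp add: v_def V_def p_def a_def)
  have rec: "avi_vbar c \<gamma> (Suc m) = (1 - a / (real m + 1)) * v + a / (real m + 1) * V"
    by (simp add: v_def Let_def cV a_def field_simps)
  have co: "0 \<le> 1 - a / (real m + 1)" using a0 by (simp add: field_simps)
  have "(1 - a / (real m + 1)) * v \<ge> (1 - a / (real m + 1)) * (V * (1 - p))"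
    using IH co by (rule mult_left_mono)
  hence A: "avi_vbar c \<gamma> (Suc m) \<ge> V - V * ((1 - a / (real m + 1)) * p)"
  proof -
    have "(1 - a / (real m + 1)) * (V * (1 - p)) + a / (real m + 1) * V = V - V * ((1 - a / (real m + 1)) * p)"
      by (simp only: left_diff_distrib right_diff_distrib mult_1_left mult_1_right mult.assoc mult.left_commute)
    thus ?thesis using \<open>(1 - a / (real m + 1)) * v \<ge> _\<close> unfolding rec by linarith
  qed
  have "V * ((1 - a / (real m + 1)) * p) \<le> V * (real m + 2) powr (-a)"
    using key[OF a0, of m] V0 by (simp add: p_def mult_left_mono)
  hence B: "V - V * ((1 - a / (real m + 1)) * p) \<ge> V * (1 - (real m + 2) powr (-a))"
    by (simp add: algebra_simps)
  have "avi_vbar c \<gamma> (Suc m) \<ge> V * (1 - (real m + 2) powr (-a))" using A B by linarith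
  thus ?case by (simp add: V_def a_def add.commute)
qed

end
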